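(* For every $N\ge 3$, $\mathbb{E}[\mathcal{N}_1(N)^3]=\frac{N^2(N+1)}{8}$ and the third cumulant vanishes: $\mathbb{E}\big[(\mathcal{N}_1(N)-N/2)^3\big]=0$. For every $N\ge 5$, $$\mathbb{E}[\mathcal{N}_1(N)^4]=\frac{N(15N^3+30N^2+5N-2)}{240},$$ and the fourth cumulant of $\mathcal{N}_1(N)$ equals $-N/120$.
   Context: A random recursive hypergraph (RRH) is the random hypergraph process defined as follows. At size $N=1$ it has vertex set $\{v_1\}$ and edge set $\{\{v_1\}\}$. Given the hypergraph of size $N$ (vertices $v_1,\dots,v_N$, exactly $N$ edges), one chooses an existing edge $e$ uniformly at random, independently of the past, and adds a new vertex $v_{N+1}$ together with the new edge $e\cup\{v_{N+1}\}$. The degree of a vertex is the number of edges containing it. $\mathcal{N}_k(N)$ denotes the number of vertices of degree $k$ in the RRH of size $N$. The fourth cumulant of a random variable $X$ with mean $\mu$ is $\mathbb{E}[(X-\mu)^4]-3\operatorname{Var}[X]^2$. *)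

theory Defs
  imports "HOL-Probability.Probability"
begin

text \<open>A hypergraph of the RRH process is represented by its list of edges (each a set of
vertices). The RRH of size N has vertices 0, ..., N-1 (vertex v_i is i-1) and N edges.\<close>

type_synonym hgraph = "nat set list"

fun rrh :: "nat \<Rightarrow> hgraph pmf" where
  "rrh 0 = return_pmf []"
| "rrh (Suc 0) = return_pmf [{0}]"
| "rrh (Suc (Suc n)) =
     rrh (Suc n) \<bind> (\<lambda>es. map_pmf (\<lambda>i. es @ [(es ! i) \<union> {Suc n}]) (pmf_of_set {..<length es}))"

definition degree :: "hgraph \<Rightarrow> nat \<Rightarrow> nat" where
  "degree es v = length (filter (\<lambda>e. v \<in> e) es)"

definition numdeg :: "nat \<Rightarrow> nat \<Rightarrow> hgraph \<Rightarrow> nat" where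
  "numdeg N k es = card {v. v < N \<and> degree es v = k}"

definition fourth_cumulant :: "'a pmf \<Rightarrow> ('a \<Rightarrow> real) \<Rightarrow> real" where
  "fourth_cumulant p X =
     measure_pmf.expectation p (\<lambda>x. (X x - measure_pmf.expectation p X) ^ 4)
     - 3 * (measure_pmf.variance p X)\<^sup>2"

end

theory Submission
  imports Defs
begin

lemma len_rrh: "es \<in> set_pmf (rrh N) \<Longrightarrow> length es = N"
  by (induction N arbitrary: es rule: rrh.induct) (auto simp: set_bind_pmf)

lemma fin_rrh: "finite (set_pmf (rrh N))"
proof (induction N rule: rrh.induct)
  case (3 n)
  have "\<And>x. x \<in> set_pmf (rrh (Suc n)) \<Longrightarrow> finite (set_pmf (pmf_of_set {..<length x}))"
    using len_rrh by (subst set_pmf_of_set) auto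
  then show ?case using 3 by (auto simp: set_bind_pmf)
qed auto

definition inv :: "nat \<Rightarrow> hgraph \<Rightarrow> bool" where
 "inv N es \<longleftrightarrow> length es = N \<and> (\<forall>i<N. i \<in> es!i \<and> es!i \<subseteq> {..<N} \<and> (\<forall>v\<in>es!i. v \<noteq> i \<longrightarrow> 2 \<le> degree es v))"

lemma degree_snoc: "degree (es @ [e]) v = degree es v + (if v \<in> e then 1 else 0)"
  by (simp add: degree_def)

lemma degree_pos: "j < length es \<Longrightarrow> v \<in> es!j \<Longrightarrow> degree es v \<ge> 1"
proof -
  assume "j < length es" "v \<in> es!j"
  then have "filter (\<lambda>e. v \<in> e) es \<noteq> []" by (auto simp: filter_empty_conv)
  then show ?thesis by (simp add: degree_def Suc_le_eq)
qed

lemma inv_step: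
  assumes "inv N es" "i < N"
  shows "inv (Suc N) (es @ [es!i \<union> {N}])"
  unfolding inv_def
proof (intro conjI allI impI ballI)
  show "length (es @ [es ! i \<union> {N}]) = Suc N" using assms by (simp add: inv_def)
next
  fix j assume j: "j < Suc N"
  have len: "length es = N" using assms by (simp add: inv_def)
  show "j \<in> (es @ [es ! i \<union> {N}]) ! j"
    using assms j len by (cases "j < N") (auto simp: inv_def nth_append)
  show "(es @ [es ! i \<union> {N}]) ! j \<subseteq> {..<Suc N}"
  proof (cases "j < N")
    case True
    have "es ! j \<subseteq> {..<N}" using assms True by (simp add: inv_def)
    then show ?thesis using True len by (auto simp: nth_append)
  next
    case False
    have "es ! i \<subseteq> {..<N}" using assms by (simp add: inv_def)
    then show ?thesis using False j len by (auto simp: nth_append)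
  qed
  fix v assume v: "v \<in> (es @ [es ! i \<union> {N}]) ! j" "v \<noteq> j"
  show "2 \<le> degree (es @ [es ! i \<union> {N}]) v"
  proof (cases "j < N")
    case True
    then have "v \<in> es!j" using v len by (simp add: nth_append)
    then have "2 \<le> degree es v" using assms True v by (auto simp: inv_def)
    then show ?thesis by (simp add: degree_snoc)
  next
    case False
    then have jN: "j = N" using j by simp
    then have vi: "v \<in> es!i" using v len by (simp add: nth_append)
    have "1 \<le> degree es v" using degree_pos[OF _ vi] assms len by simp
    then show ?thesis using vi by (simp add: degree_snoc)
  qed
qed

lemma inv_rrh: "es \<in> set_pmf (rrh N) \<Longrightarrow> N \<ge> 1 \<Longrightarrow> inv N es"
proof (induction N arbitrary: es rule: rrh.induct)
  case 1 then show ?case by simp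
next
  case 2 then show ?case by (auto simp: inv_def degree_def)
next
  case (3 n)
  then obtain es0 where es0: "es0 \<in> set_pmf (rrh (Suc n))"
    and "es \<in> set_pmf (map_pmf (\<lambda>i. es0 @ [(es0 ! i) \<union> {Suc n}]) (pmf_of_set {..<length es0}))"
    by (auto simp: set_bind_pmf)
  moreover have "length es0 = Suc n" using es0 len_rrh by blast
  ultimately obtain i where i: "i < length es0"
    and es: "es = es0 @ [(es0 ! i) \<union> {Suc n}]" by (auto simp: set_pmf_of_set lessThan_empty_iff)
  have "inv (Suc n) es0" using 3 es0 by simp
  moreover have "i < Suc n" using i len_rrh[OF es0] by simp
  ultimately show ?case using inv_step es by simp
qed

lemma degree_N: "inv N es \<Longrightarrow> degree es N = 0"
proof -
  assume a: "inv N es"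
  have "\<forall>e\<in>set es. N \<notin> e"
  proof
    fix e assume "e \<in> set es"
    then obtain j where j: "j < N" "e = es!j" using a by (auto simp: inv_def in_set_conv_nth)
    then have "e \<subseteq> {..<N}" using a by (simp add: inv_def)
    then show "N \<notin> e" by auto
  qed
  then show ?thesis by (simp add: degree_def filter_empty_conv)
qed

lemma numdeg_step:
  assumes a: "inv N es" and i: "i < N"
  shows "numdeg (Suc N) 1 (es @ [es!i \<union> {N}]) =
     (if degree es i = 1 then numdeg N 1 es else Suc (numdeg N 1 es))"
proof -
  define S where "S = {v. v<N \<and> degree es v = 1}"
  have len: "length es = N" using a by (simp add: inv_def)
  have ii: "i \<in> es!i" using a i by (simp add: inv_def)
  have d2: "\<And>v. v \<in> es!i \<Longrightarrow> v \<noteq> i \<Longrightarrow> 2 \<le> degree es v" using a i by (simp add: inv_def)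
  have di: "1 \<le> degree es i" using degree_pos[of i es i] ii i len by simp
  have sub: "es!i \<subseteq> {..<N}" using a i by (simp add: inv_def)
  have eq: "{v. v < Suc N \<and> degree (es @ [es!i \<union> {N}]) v = 1} = insert N (S - {i})"
  proof (intro set_eqI iffI)
    fix v assume "v \<in> {v. v < Suc N \<and> degree (es @ [es!i \<union> {N}]) v = 1}"
    then have v: "v < Suc N" "degree es v + (if v \<in> es!i \<or> v = N then 1 else 0) = 1"
      by (auto simp: degree_snoc)
    show "v \<in> insert N (S - {i})"
    proof (cases "v = N")
      case False
      then have "v < N" using v by simp
      moreover have "v \<notin> es!i"
      proof
        assume "v \<in> es!i"
        then show False using v d2[of v] di by (cases "v = i") auto
      qed
      ultimately show ?thesis using v ii False by (auto simp: S_def)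
    qed simp
  next
    fix v assume "v \<in> insert N (S - {i})"
    then consider "v = N" | "v < N" "degree es v = 1" "v \<noteq> i" by (auto simp: S_def)
    then show "v \<in> {v. v < Suc N \<and> degree (es @ [es!i \<union> {N}]) v = 1}"
    proof cases
      case 1 then show ?thesis using degree_N[OF a] by (simp add: degree_snoc)
    next
      case 2
      have "v \<notin> es!i" using 2 d2[of v] by auto
      then show ?thesis using 2 by (simp add: degree_snoc)
    qed
  qed
  have finS: "finite S" by (simp add: S_def)
  have NS: "N \<notin> S" by (simp add: S_def)
  have "numdeg (Suc N) 1 (es @ [es!i \<union> {N}]) = Suc (card (S - {i}))"
    unfolding numdeg_def eq using finS NS by simp
  moreover have "numdeg N 1 es = card S" by (simp add: numdeg_def S_def)
  moreover have "i \<in> S \<longleftrightarrow> degree es i = 1" using i by (simp add: S_def)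
  ultimately show ?thesis using finS
    by (auto simp: card_Diff_singleton card_gt_0_iff) (metis Suc_pred card_gt_0_iff empty_iff)
qed

lemma numdeg_le: "numdeg N k es \<le> N"
proof -
  have "{v. v < N \<and> degree es v = k} \<subseteq> {..<N}" by auto
  then show ?thesis unfolding numdeg_def by (metis card_lessThan card_mono finite_lessThan)
qed

lemma sum_step:
  fixes f :: "nat \<Rightarrow> real"
  assumes a: "inv N es"
  shows "(\<Sum>i<N. f (numdeg (Suc N) 1 (es @ [es!i \<union> {N}]))) =
    real (numdeg N 1 es) * f (numdeg N 1 es) + (real N - real (numdeg N 1 es)) * f (Suc (numdeg N 1 es))"
proof -
  define X where "X = numdeg N 1 es"
  have "(\<Sum>i<N. f (numdeg (Suc N) 1 (es @ [es!i \<union> {N}]))) =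
        (\<Sum>i<N. if degree es i = 1 then f X else f (Suc X))"
    using numdeg_step[OF a] by (intro sum.cong) (auto simp: X_def)
  also have "\<dots> = real (card ({..<N} \<inter> {i. degree es i = 1})) * f X
      + real (card ({..<N} \<inter> - {i. degree es i = 1})) * f (Suc X)"
    by (simp add: sum.If_cases)
  also have cX: "card ({..<N} \<inter> {i. degree es i = 1}) = X"
    unfolding X_def numdeg_def by (rule arg_cong[where f=card]) auto
  also have "{..<N} \<inter> - {i. degree es i = 1} = {..<N} - ({..<N} \<inter> {i. degree es i = 1})" by auto
  also have "card \<dots> = N - X"
    by (subst card_Diff_subset) (use cX in auto)
  finally show ?thesis using numdeg_le[of N 1 es] by (simp add: X_def of_nat_diff)
qed

lemma exp_step:
  fixes f :: "nat \<Rightarrow> real"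
  assumes N: "N \<ge> 1"
  shows "measure_pmf.expectation (rrh (Suc N)) (\<lambda>H. f (numdeg (Suc N) 1 H)) =
    measure_pmf.expectation (rrh N) (\<lambda>H. (real (numdeg N 1 H) * f (numdeg N 1 H)
      + (real N - real (numdeg N 1 H)) * f (Suc (numdeg N 1 H))) / real N)"
proof -
  obtain n where n: "N = Suc n" using N by (cases N) auto
  let ?A = "set_pmf (rrh (Suc n))"
  let ?g = "\<lambda>H. (real (numdeg N 1 H) * f (numdeg N 1 H)
      + (real N - real (numdeg N 1 H)) * f (Suc (numdeg N 1 H))) / real N"
  have fin: "\<And>x. x \<in> ?A \<Longrightarrow> finite (set_pmf (map_pmf (\<lambda>i. x @ [(x ! i) \<union> {Suc n}]) (pmf_of_set {..<length x})))"
    using len_rrh by (auto simp: set_pmf_of_set lessThan_empty_iff)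
  have "measure_pmf.expectation (rrh (Suc N)) (\<lambda>H. f (numdeg (Suc N) 1 H)) =
     (\<Sum>a\<in>?A. pmf (rrh (Suc n)) a *\<^sub>R measure_pmf.expectation
        (map_pmf (\<lambda>i. a @ [(a ! i) \<union> {Suc n}]) (pmf_of_set {..<length a})) (\<lambda>H. f (numdeg (Suc N) 1 H)))"
    unfolding n rrh.simps by (rule pmf_expectation_bind) (use fin fin_rrh in auto)
  also have "\<dots> = (\<Sum>a\<in>?A. pmf (rrh (Suc n)) a *\<^sub>R ?g a)"
  proof (intro sum.cong refl arg_cong2[where f="(*\<^sub>R)"])
    fix a assume a: "a \<in> ?A"
    have l: "length a = N" using len_rrh[OF a] n by simp
    have iv: "inv N a" using inv_rrh[OF a] n by simp
    show "measure_pmf.expectation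
        (map_pmf (\<lambda>i. a @ [(a ! i) \<union> {Suc n}]) (pmf_of_set {..<length a})) (\<lambda>H. f (numdeg (Suc N) 1 H)) = ?g a"
      using sum_step[OF iv, of f] l n by (simp add: integral_pmf_of_set lessThan_empty_iff)
  qed
  also have "\<dots> = measure_pmf.expectation (rrh N) ?g"
    unfolding n by (rule integral_measure_pmf[symmetric]) (use fin_rrh in auto)
  finally show ?thesis .
qed

definition m :: "nat \<Rightarrow> nat \<Rightarrow> real" where
  "m k N = measure_pmf.expectation (rrh N) (\<lambda>H. real (numdeg N 1 H) ^ k)"

lemma E_poly:
  "measure_pmf.expectation (rrh N) (\<lambda>H. a4 * real (numdeg N 1 H)^4 + a3 * real (numdeg N 1 H)^3
     + a2 * real (numdeg N 1 H)^2 + a1 * real (numdeg N 1 H) + a0)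
   = a4 * m 4 N + a3 * m 3 N + a2 * m 2 N + a1 * m 1 N + a0"
  by (simp add: integrable_measure_pmf_finite fin_rrh m_def)

lemma m_rec:
  assumes "N \<ge> 1"
  shows "m k (Suc N) = measure_pmf.expectation (rrh N) (\<lambda>H. (real (numdeg N 1 H) * real (numdeg N 1 H) ^ k
      + (real N - real (numdeg N 1 H)) * real (Suc (numdeg N 1 H)) ^ k) / real N)"
  unfolding m_def using exp_step[OF assms, of "\<lambda>n. real n ^ k"] by simp

lemma m1_rec: "N \<ge> 1 \<Longrightarrow> m 1 (Suc N) = (1 - 1/N) * m 1 N + 1"
proof -
  assume N: "N \<ge> 1"
  have "m 1 (Suc N) = measure_pmf.expectation (rrh N) (\<lambda>H. 0 * real (numdeg N 1 H)^4 + 0 * real (numdeg N 1 H)^3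
     + 0 * real (numdeg N 1 H)^2 + (1 - 1/N) * real (numdeg N 1 H) + 1)"
    unfolding m_rec[OF N] using N by (intro Bochner_Integration.integral_cong refl) (simp add: field_simps power2_eq_square)
  then show ?thesis by (simp only: E_poly)
qed

lemma m2_rec: "N \<ge> 1 \<Longrightarrow> m 2 (Suc N) = (1 - 2/N) * m 2 N + (2 - 1/N) * m 1 N + 1"
proof -
  assume N: "N \<ge> 1"
  have "m 2 (Suc N) = measure_pmf.expectation (rrh N) (\<lambda>H. 0 * real (numdeg N 1 H)^4 + 0 * real (numdeg N 1 H)^3
     + (1 - 2/N) * real (numdeg N 1 H)^2 + (2 - 1/N) * real (numdeg N 1 H) + 1)"
    unfolding m_rec[OF N] using N by (intro Bochner_Integration.integral_cong refl) (simp add: field_simps power2_eq_square)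
  then show ?thesis by (simp only: E_poly)
qed

lemma m3_rec: "N \<ge> 1 \<Longrightarrow> m 3 (Suc N) = (1 - 3/N) * m 3 N + (3 - 3/N) * m 2 N + (3 - 1/N) * m 1 N + 1"
proof -
  assume N: "N \<ge> 1"
  have "m 3 (Suc N) = measure_pmf.expectation (rrh N) (\<lambda>H. 0 * real (numdeg N 1 H)^4 + (1 - 3/N) * real (numdeg N 1 H)^3
     + (3 - 3/N) * real (numdeg N 1 H)^2 + (3 - 1/N) * real (numdeg N 1 H) + 1)"
    unfolding m_rec[OF N] using N by (intro Bochner_Integration.integral_cong refl) (simp add: field_simps power2_eq_square power3_eq_cube)
  then show ?thesis by (simp only: E_poly)
qed

lemma m4_rec: "N \<ge> 1 \<Longrightarrow> m 4 (Suc N) = (1 - 4/N) * m 4 N + (4 - 6/N) * m 3 N + (6 - 4/N) * m 2 N + (4 - 1/N) * m 1 N + 1"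
proof -
  assume N: "N \<ge> 1"
  have "m 4 (Suc N) = measure_pmf.expectation (rrh N) (\<lambda>H. (1 - 4/N) * real (numdeg N 1 H)^4 + (4 - 6/N) * real (numdeg N 1 H)^3
     + (6 - 4/N) * real (numdeg N 1 H)^2 + (4 - 1/N) * real (numdeg N 1 H) + 1)"
    unfolding m_rec[OF N] using N by (intro Bochner_Integration.integral_cong refl) (simp add: field_simps power2_eq_square power3_eq_cube power4_eq_xxxx)
  then show ?thesis by (simp only: E_poly)
qed

lemma m_1: "m k 1 = 1"
proof -
  have "numdeg 1 1 [{0}] = 1" by (simp add: numdeg_def degree_def)
  then show ?thesis by (simp add: m_def)
qed

lemma rec': "M = Suc N \<Longrightarrow> N \<ge> 1 \<Longrightarrow> m 1 M = (1 - 1/N) * m 1 N + 1"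
  "M = Suc N \<Longrightarrow> N \<ge> 1 \<Longrightarrow> m 2 M = (1 - 2/N) * m 2 N + (2 - 1/N) * m 1 N + 1"
  "M = Suc N \<Longrightarrow> N \<ge> 1 \<Longrightarrow> m 3 M = (1 - 3/N) * m 3 N + (3 - 3/N) * m 2 N + (3 - 1/N) * m 1 N + 1"
  "M = Suc N \<Longrightarrow> N \<ge> 1 \<Longrightarrow> m 4 M = (1 - 4/N) * m 4 N + (4 - 6/N) * m 3 N + (6 - 4/N) * m 2 N + (4 - 1/N) * m 1 N + 1"
  using m1_rec m2_rec m3_rec m4_rec by auto

lemma m_2: "m 1 2 = 1" "m 2 2 = 1" "m 3 2 = 1" "m 4 2 = 1"
  using rec'[of 2 1] m_1[of 1] m_1[of 2] m_1[of 3] m_1[of 4] by simp_all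

lemma m1_closed: "N \<ge> 2 \<Longrightarrow> m 1 N = real N / 2"
proof (induction N rule: nat_induct_at_least)
  case base then show ?case using m_2 by simp
next
  case (Suc n)
  have "m 1 (Suc n) = (1 - 1/n) * m 1 n + 1" by (rule m1_rec) (use Suc in simp)
  also have "\<dots> = real (Suc n) / 2" unfolding Suc.IH using Suc by (simp add: field_simps)
  finally show ?case .
qed

lemma m_3: "m 1 3 = 3/2" "m 2 3 = 5/2" "m 3 3 = 9/2" "m 4 3 = 17/2"
  using rec'[of 3 2] m_2 by simp_all

lemma m2_closed: "N \<ge> 3 \<Longrightarrow> m 2 N = real N * (3 * real N + 1) / 12"
proof (induction N rule: nat_induct_at_least)
  case base then show ?case by (simp add: m_3)
next
  case (Suc n)
  have h: "m 1 n = n/2" using Suc m1_closed by simp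
  have "m 2 (Suc n) = (1 - 2/n) * m 2 n + (2 - 1/n) * m 1 n + 1" by (rule m2_rec) (use Suc in simp)
  also have "\<dots> = real (Suc n) * (3 * real (Suc n) + 1) / 12" unfolding Suc.IH h using Suc by (simp add: field_simps)
  finally show ?case .
qed

lemma m3_closed: "N \<ge> 3 \<Longrightarrow> m 3 N = real N ^ 2 * (real N + 1) / 8"
proof (induction N rule: nat_induct_at_least)
  case base then show ?case by (simp add: m_3)
next
  case (Suc n)
  have h: "m 1 n = n/2" using Suc m1_closed by simp
  have h2: "m 2 n = real n * (3 * real n + 1) / 12" using Suc m2_closed by simp
  have "m 3 (Suc n) = (1 - 3/n) * m 3 n + (3 - 3/n) * m 2 n + (3 - 1/n) * m 1 n + 1" by (rule m3_rec) (use Suc in simp)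
  also have "\<dots> = real (Suc n) ^ 2 * (real (Suc n) + 1) / 8" unfolding Suc.IH h h2 using Suc
    by (simp add: field_simps power2_eq_square)
  finally show ?case .
qed

lemma m4_step: "n \<ge> 3 \<Longrightarrow> m 4 (Suc n) = (1 - 4/n) * m 4 n + (4 - 6/n) * (real n ^ 2 * (real n + 1) / 8)
   + (6 - 4/n) * (real n * (3 * real n + 1) / 12) + (4 - 1/n) * (n/2) + 1"
proof -
  assume n: "n \<ge> 3"
  have h: "m 1 n = n/2" using n m1_closed by simp
  have h2: "m 2 n = real n * (3 * real n + 1) / 12" using n m2_closed by simp
  have h3: "m 3 n = real n ^ 2 * (real n + 1) / 8" using n m3_closed by simp
  show ?thesis using m4_rec[of n] n unfolding h h2 h3 by simp
qed

lemma m4_closed: "N \<ge> 5 \<Longrightarrow> m 4 N = real N * (15 * real N ^ 3 + 30 * real N ^ 2 + 5 * real N - 2) / 240"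
proof (induction N rule: nat_induct_at_least)
  case base
  have m44: "m 1 4 = 2" "m 2 4 = 13/3" "m 3 4 = 10" "m 4 4 = 73/3"
    using rec'[of 4 3] m_3 by simp_all
  show ?case using rec'[of 5 4] m44 by simp_all
next
  case (Suc n)
  have "m 4 (Suc n) = (1 - 4/n) * m 4 n + (4 - 6/n) * (real n ^ 2 * (real n + 1) / 8)
   + (6 - 4/n) * (real n * (3 * real n + 1) / 12) + (4 - 1/n) * (n/2) + 1"
    by (rule m4_step) (use Suc in simp)
  also have "\<dots> = real (Suc n) * (15 * real (Suc n) ^ 3 + 30 * real (Suc n) ^ 2 + 5 * real (Suc n) - 2) / 240"
    unfolding Suc.IH using Suc by (simp add: field_simps power2_eq_square power3_eq_cube)
  finally show ?case .
qed

lemma central4: "measure_pmf.expectation (rrh N) (\<lambda>H. (real (numdeg N 1 H) - c)^4)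
   = m 4 N - 4*c * m 3 N + 6*c^2 * m 2 N - 4*c^3 * m 1 N + c^4"
proof -
  have "measure_pmf.expectation (rrh N) (\<lambda>H. (real (numdeg N 1 H) - c)^4)
    = measure_pmf.expectation (rrh N) (\<lambda>H. 1 * real (numdeg N 1 H)^4 + (-4*c) * real (numdeg N 1 H)^3
     + (6*c^2) * real (numdeg N 1 H)^2 + (-4*c^3) * real (numdeg N 1 H) + c^4)"
    by (intro Bochner_Integration.integral_cong refl) (simp add: power2_eq_square power3_eq_cube power4_eq_xxxx algebra_simps)
  then show ?thesis by (simp only: E_poly)
qed

lemma central3: "measure_pmf.expectation (rrh N) (\<lambda>H. (real (numdeg N 1 H) - c)^3)
   = m 3 N - 3*c * m 2 N + 3*c^2 * m 1 N - c^3"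
proof -
  have "measure_pmf.expectation (rrh N) (\<lambda>H. (real (numdeg N 1 H) - c)^3)
    = measure_pmf.expectation (rrh N) (\<lambda>H. 0 * real (numdeg N 1 H)^4 + 1 * real (numdeg N 1 H)^3
     + (-3*c) * real (numdeg N 1 H)^2 + (3*c^2) * real (numdeg N 1 H) + (- (c^3)))"
    by (intro Bochner_Integration.integral_cong refl) (simp add: power2_eq_square power3_eq_cube algebra_simps)
  then show ?thesis by (simp only: E_poly)
qed

lemma central2: "measure_pmf.expectation (rrh N) (\<lambda>H. (real (numdeg N 1 H) - c)^2)
   = m 2 N - 2*c * m 1 N + c^2"
proof -
  have "measure_pmf.expectation (rrh N) (\<lambda>H. (real (numdeg N 1 H) - c)^2)
    = measure_pmf.expectation (rrh N) (\<lambda>H. 0 * real (numdeg N 1 H)^4 + 0 * real (numdeg N 1 H)^3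
     + 1 * real (numdeg N 1 H)^2 + (-2*c) * real (numdeg N 1 H) + c^2)"
    by (intro Bochner_Integration.integral_cong refl) (simp add: power2_eq_square algebra_simps)
  then show ?thesis by (simp only: E_poly)
qed

theorem mainTheorem3:
  shows "(\<forall>N::nat. N \<ge> 3 \<longrightarrow>
            measure_pmf.expectation (rrh N) (\<lambda>H. real (numdeg N 1 H) ^ 3)
              = real N ^ 2 * (real N + 1) / 8
          \<and> measure_pmf.expectation (rrh N) (\<lambda>H. (real (numdeg N 1 H) - real N / 2) ^ 3) = 0)
       \<and> (\<forall>N::nat. N \<ge> 5 \<longrightarrow>
            measure_pmf.expectation (rrh N) (\<lambda>H. real (numdeg N 1 H) ^ 4)
              = real N * (15 * real N ^ 3 + 30 * real N ^ 2 + 5 * real N - 2) / 240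
          \<and> fourth_cumulant (rrh N) (\<lambda>H. real (numdeg N 1 H)) = - real N / 120)"
proof (intro conjI allI impI)
  fix N :: nat assume N: "N \<ge> 3"
  have h1: "m 1 N = N/2" using N m1_closed by simp
  note c = h1 m2_closed[OF N] m3_closed[OF N]
  show "measure_pmf.expectation (rrh N) (\<lambda>H. real (numdeg N 1 H) ^ 3) = real N ^ 2 * (real N + 1) / 8"
    using c(3) by (simp add: m_def)
  show "measure_pmf.expectation (rrh N) (\<lambda>H. (real (numdeg N 1 H) - real N / 2) ^ 3) = 0"
    unfolding central3 c using N by (simp add: field_simps power2_eq_square power3_eq_cube)
next
  fix N :: nat assume N: "N \<ge> 5"
  have h1: "m 1 N = N/2" using N m1_closed by simp
  have h2: "m 2 N = real N * (3 * real N + 1) / 12" using N m2_closed by simp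
  have h3: "m 3 N = real N ^ 2 * (real N + 1) / 8" using N m3_closed by simp
  note c = h1 h2 h3 m4_closed[OF N]
  show "measure_pmf.expectation (rrh N) (\<lambda>H. real (numdeg N 1 H) ^ 4)
              = real N * (15 * real N ^ 3 + 30 * real N ^ 2 + 5 * real N - 2) / 240"
    using c(4) by (simp add: m_def)
  have mu: "measure_pmf.expectation (rrh N) (\<lambda>H. real (numdeg N 1 H)) = real N / 2"
    using c(1) N by (simp add: m_def)
  show "fourth_cumulant (rrh N) (\<lambda>H. real (numdeg N 1 H)) = - real N / 120"
    unfolding fourth_cumulant_def mu central4 central2 c using N
    by (simp add: field_simps power2_eq_square power3_eq_cube power4_eq_xxxx)
qed

end
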